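(* Let $q$ be odd with $q\equiv1\pmod 4$, and let $\delta\in\mathbb{F}_{q^8}^*$ with $\delta\neq\pm1$ and $\delta^2=-1$. Then $S(x)=x^q+\delta x^{q^5}$ is not a scattered polynomial of index $t$ over $\mathbb{F}_{q^8}$ for either $t=1$ or $t=5$.
   Context: An $\mathbb{F}_q$-linearized polynomial $S\in\mathbb{F}_{q^n}[x]$ is a scattered polynomial of index $t$ over $\mathbb{F}_{q^n}$ if for all $y,z\in\mathbb{F}_{q^n}^*$, $\frac{S(y)}{y^{q^t}}=\frac{S(z)}{z^{q^t}}$ implies $y/z\in\mathbb{F}_q$. *)

theory Defs
  imports "HOL-Computational_Algebra.Primes"
begin

text \<open>The field F_{q^n} is modelled by a finite field type 'a of cardinality q^n; its
subfield F_q is the set of elements with y^q = y.\<close>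

definition scattered_index :: "nat \<Rightarrow> nat \<Rightarrow> ('a::field \<Rightarrow> 'a) \<Rightarrow> bool" where
  "scattered_index q t S \<longleftrightarrow>
     (\<forall>y z. y \<noteq> 0 \<longrightarrow> z \<noteq> 0 \<longrightarrow> S y / y ^ (q ^ t) = S z / z ^ (q ^ t) \<longrightarrow> (y / z) ^ q = y / z)"

end

theory Submission
  imports Defs "HOL-Computational_Algebra.Polynomial"
begin

lemma fermat_ff:
  fixes a :: "'a::{field,finite}"
  assumes "a \<noteq> 0"
  shows "a ^ card (UNIV - {0::'a}) = 1"
proof -
  let ?U = "UNIV - {0::'a}"
  have bij: "bij_betw (\<lambda>x. a * x) ?U ?U"
    by (rule bij_betw_byWitness[where f'="\<lambda>x. x / a"]) (use assms in auto)
  have "prod id ?U = prod (id \<circ> (\<lambda>x. a * x)) ?U"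
    using prod.reindex_bij_betw[OF bij, of id] by simp
  also have "\<dots> = a ^ card ?U * prod id ?U"
    by (simp add: prod.distrib)
  finally have "1 * prod id ?U = a ^ card ?U * prod id ?U" by simp
  moreover have "prod id ?U \<noteq> 0" by (simp add: prod_zero_iff)
  ultimately show ?thesis by (metis mult_right_cancel)
qed

lemma roots_bound:
  fixes N :: nat
  assumes "N > 0"
  shows "card {x::'a::field. x ^ N = 1} \<le> N"
proof -
  have "monom (1::'a) N - 1 \<noteq> 0"
  proof
    assume "monom (1::'a) N - 1 = 0"
    then have "coeff (monom (1::'a) N - 1) N = 0" by simp
    with assms show False by (simp add: coeff_diff)
  qed
  moreover have "degree (monom (1::'a) N - 1) \<le> N"
    by (intro degree_diff_le degree_monom_le) auto
  moreover have "{x::'a. x ^ N = 1} = {x. poly (monom 1 N - 1) x = 0}"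
    by (simp add: poly_monom)
  ultimately show ?thesis using card_poly_roots_bound by (metis order_trans)
qed

theorem mainTheorem11:
  fixes q p k :: nat and \<delta> :: "'a::{field,finite}"
  assumes "prime p" and "k > 0" and "q = p ^ k"
    and "odd q" and "q mod 4 = 1"
    and "card (UNIV :: 'a set) = q ^ 8"
    and "\<delta> \<noteq> 0" and "\<delta> \<noteq> 1" and "\<delta> \<noteq> -1" and "\<delta>\<^sup>2 = -1"
  shows "\<not> scattered_index q 1 (\<lambda>x. x ^ q + \<delta> * x ^ (q ^ 5)) \<and>
         \<not> scattered_index q 5 (\<lambda>x. x ^ q + \<delta> * x ^ (q ^ 5))"
proof -
  have q2: "q \<ge> 2"
    using assms(1-3) by (metis One_nat_def Suc_1 Suc_leI le_less linorder_not_less one_less_power prime_gt_1_nat)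
  have cU: "card (UNIV - {0::'a}) = q ^ 8 - 1"
    using assms(6) by (simp add: card_Diff_singleton)
  have ferm: "x ^ (q ^ 8) = x" for x :: 'a
  proof (cases "x = 0")
    case True then show ?thesis using q2 by simp
  next
    case False
    have "q ^ 8 = Suc (q ^ 8 - 1)" using q2 by (simp add: Suc_diff_1)
    then have "x ^ (q ^ 8) = x * x ^ (q ^ 8 - 1)" by (metis power_Suc)
    then show ?thesis using fermat_ff[OF False] cU by simp
  qed
  define N where "N = (q ^ 4 + 1) * (q - 1)"
  have Npos: "N > 0" using q2 unfolding N_def by simp
  have NU: "N < q ^ 8 - 1"
  proof -
    have "N < (q ^ 4 + 1) * q" unfolding N_def using q2 by (intro mult_strict_left_mono) auto
    also have "\<dots> = q ^ 5 + q" by (simp add: algebra_simps flip: power_Suc)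
    also have "\<dots> \<le> q ^ 5 + q ^ 5" using q2 by (simp add: self_le_power)
    also have "\<dots> = 2 * q ^ 5" by simp
    also have "\<dots> \<le> q * q ^ 5" using q2 by simp
    also have "\<dots> < q ^ 8 - 1"
    proof -
      have "q * q ^ 5 = q ^ 6" by (simp flip: power_Suc)
      moreover have "q ^ 6 * 4 \<le> q ^ 6 * q ^ 2" using q2
        by (metis mult_le_mono2 power2_eq_square mult_le_mono Suc_1 numeral_Bit0 numeral_One  one_add_one mult_2 add_mono)
      moreover have "q ^ 6 * q ^ 2 = q ^ 8" by (simp flip: power_add)
      moreover have "q ^ 6 \<ge> 1" using q2 by simp
      ultimately show ?thesis by linarith
    qed
    finally show ?thesis .
  qed
  have "\<not> (UNIV - {0::'a}) \<subseteq> {x. x ^ N = 1}"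
  proof
    assume "UNIV - {0::'a} \<subseteq> {x. x ^ N = 1}"
    then have "card (UNIV - {0::'a}) \<le> card {x::'a. x ^ N = 1}"
      by (intro card_mono) auto
    with roots_bound[OF Npos, where 'a='a] cU NU show False by simp
  qed
  then obtain a :: 'a where a0: "a \<noteq> 0" and aN: "a ^ N \<noteq> 1" by auto
  define w where "w = a ^ (q ^ 4 + 1)"
  have w0: "w \<noteq> 0" using a0 by (simp add: w_def)
  have wq: "w ^ q \<noteq> w"
  proof
    assume "w ^ q = w"
    then have "w * w ^ (q - 1) = w * 1" using q2
      by (metis mult.right_neutral power_eq_if not_numeral_le_zero)
    then have "w ^ (q - 1) = 1" using w0 by simp
    then show False using aN unfolding w_def N_def by (metis power_mult)
  qed
  have w4: "w ^ (q ^ 4) = w"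
  proof -
    have "w ^ (q ^ 4) = a ^ (q ^ 4 * q ^ 4) * a ^ (q ^ 4)"
      unfolding w_def by (simp add: power_mult[symmetric] algebra_simps power_add)
    also have "q ^ 4 * q ^ 4 = q ^ 8" by (simp flip: power_add)
    finally show ?thesis using ferm unfolding w_def by (simp add: power_add)
  qed
  have w5: "w ^ (q ^ 5) = w ^ q"
  proof -
    have "w ^ (q ^ 5) = (w ^ (q ^ 4)) ^ q" by (metis power_mult power_Suc2 numeral_nat(3) numeral_Bit1 Suc_numeral semiring_norm(5) add_One)
    then show ?thesis using w4 by simp
  qed
  have wq0: "w ^ q \<noteq> 0" using w0 by simp
  have e1: "(w ^ q + \<delta> * w ^ (q ^ 5)) / w ^ (q ^ 1) = ((1::'a) ^ q + \<delta> * 1 ^ (q ^ 5)) / 1 ^ (q ^ 1)"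
    using w5 wq0 by (simp add: field_simps)
  have e5: "(w ^ q + \<delta> * w ^ (q ^ 5)) / w ^ (q ^ 5) = ((1::'a) ^ q + \<delta> * 1 ^ (q ^ 5)) / 1 ^ (q ^ 5)"
    using w5 wq0 by (simp add: field_simps)
  show ?thesis
    unfolding scattered_index_def
    using e1 e5 w0 wq by (metis div_by_1 one_neq_zero)
qed

end
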